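(* Let $\mathbf{x}=x_1x_2\ldots$ be an infinite word over a finite alphabet. The following statements are equivalent: (i) $\mathbf{x}$ is eventually periodic; (ii) $r(n,\mathbf{x})\le 2n$ for all sufficiently large integers $n$; (iii) there exists $M$ such that $r(n,\mathbf{x})-n\le M$ for all $n\ge 1$.
   Context: For integers $i\le j$, $x_i^j$ denotes the factor $x_ix_{i+1}\cdots x_j$ of $\mathbf{x}$. For $n\ge1$, $r(n,\mathbf{x})=\min\{m\ge1:\ x_i^{i+n-1}=x_{m-n+1}^{m}\text{ for some } i \text{ with } 1\le i\le m-n\}$, i.e. the length of the shortest prefix of $\mathbf{x}$ containing two (possibly overlapping) occurrences of some word of length $n$. *)

theory Defs
  imports Main
begin

text \<open>An infinite word x = x_1 x_2 ... is modelled as a function nat => 'a;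
  only positions k >= 1 are meaningful (x 0 is ignored).\<close>

definition eventually_periodic :: "(nat \<Rightarrow> 'a) \<Rightarrow> bool" where
  "eventually_periodic x \<longleftrightarrow> (\<exists>p>0. \<exists>N\<ge>1. \<forall>k\<ge>N. x (k + p) = x k)"

definition r :: "nat \<Rightarrow> (nat \<Rightarrow> 'a) \<Rightarrow> nat" where
  "r n x = (LEAST m. m \<ge> 1 \<and>
     (\<exists>i. 1 \<le> i \<and> i + n \<le> m \<and> (\<forall>k<n. x (i + k) = x (m + 1 - n + k))))"

end

theory Submission
  imports Defs
begin

definition per :: "(nat \<Rightarrow> 'a) \<Rightarrow> nat \<Rightarrow> nat \<Rightarrow> nat \<Rightarrow> bool" where
  "per x a b p \<longleftrightarrow> (\<forall>k. a \<le> k \<longrightarrow> k + p \<le> b \<longrightarrow> x k = x (k + p))"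

lemma per_mono: "per x a b p \<Longrightarrow> a \<le> a' \<Longrightarrow> b' \<le> b \<Longrightarrow> per x a' b' p"
  unfolding per_def by auto

lemma per_mult: "per x a c g \<Longrightarrow> a \<le> j \<Longrightarrow> j + m*g \<le> c \<Longrightarrow> x j = x (j + m*g)"
proof (induction m)
  case 0 then show ?case by simp
next
  case (Suc m)
  then have "x j = x (j + m*g)" by simp
  also have "\<dots> = x (j + m*g + g)" using Suc.prems unfolding per_def by auto
  finally show ?case by (simp add: algebra_simps)
qed

lemma per_cong:
  assumes "per x a b p" "a \<le> i" "i \<le> b" "a \<le> j" "j \<le> b" "i mod p = j mod p"
  shows "x i = x j"
proof -
  have gen: "x i = x j" if "per x a b p" "a \<le> i" "i \<le> j" "j \<le> b" "i mod p = j mod p" for i j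
  proof -
    have "(j - i) mod p = 0" using that by (metis mod_eq_dvd_iff_nat dvd_eq_mod_eq_0)
    then have "j = i + ((j - i) div p) * p" using that(3)
      by (metis add_diff_inverse_nat add_0_right div_mult_mod_eq not_le)
    then show ?thesis using per_mult[OF that(1) that(2), of "(j-i) div p"] that(4) by metis
  qed
  show ?thesis
  proof (cases "i \<le> j")
    case True then show ?thesis using gen assms by blast
  next
    case False then show ?thesis using gen[of j i] assms by auto
  qed
qed

lemma rep_exists:
  assumes "0 < (p::nat)"
  shows "\<exists>k'. c \<le> k' \<and> k' < c + p \<and> k' mod p = k mod p"
proof -
  define k' where "k' = c + (k + p*c - c) mod p"
  have "c \<le> p*c" using assms by simp
  then have "k' mod p = (c + (k + p*c - c)) mod p" unfolding k'_def by (simp add: mod_add_right_eq)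
  also have "c + (k + p*c - c) = k + p*c" using \<open>c \<le> p*c\<close> by linarith
  also have "(k + p*c) mod p = k mod p" by simp
  finally have "k' mod p = k mod p" .
  moreover have "c \<le> k'" "k' < c + p" using assms unfolding k'_def by auto
  ultimately show ?thesis by blast
qed

lemma per_extend:
  assumes "per x a b p" "per x c d g" "a \<le> c" "d \<le> b" "c + p \<le> d + 1" "g dvd p" "0 < p" "0 < g"
  shows "per x a b g"
  unfolding per_def
proof (intro allI impI)
  fix k assume k: "a \<le> k" "k + g \<le> b"
  obtain k1 where k1: "c \<le> k1" "k1 < c + p" "k1 mod p = k mod p" using rep_exists[OF assms(7)] by blast
  obtain k2 where k2: "c \<le> k2" "k2 < c + p" "k2 mod p = (k+g) mod p" using rep_exists[OF assms(7)] by blast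
  have "x k = x k1" using per_cong[OF assms(1), of k k1] k k1 assms by auto
  moreover have "x (k+g) = x k2" using per_cong[OF assms(1), of "k+g" k2] k k2 assms by auto
  moreover have "k1 mod g = k2 mod g"
  proof -
    have "k1 mod g = (k1 mod p) mod g" using assms(6) by (simp add: mod_mod_cancel)
    also have "\<dots> = k mod g" using k1 assms(6) by (simp add: mod_mod_cancel)
    also have "\<dots> = (k+g) mod g" by simp
    also have "\<dots> = ((k+g) mod p) mod g" using assms(6) by (simp add: mod_mod_cancel)
    also have "\<dots> = k2 mod g" using k2(3) assms(6) by (metis mod_mod_cancel)
    finally show ?thesis .
  qed
  moreover have "x k1 = x k2" using per_cong[OF assms(2), of k1 k2] k1 k2 assms calculation by auto
  ultimately show "x k = x (k + g)" by simp
qed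

lemma fine_wilf:
  "0 < p \<Longrightarrow> 0 < q \<Longrightarrow> per x a b p \<Longrightarrow> per x a b q \<Longrightarrow> a + p + q \<le> b + 1 + gcd p q
   \<Longrightarrow> per x a b (gcd p q)"
proof (induction "p + q" arbitrary: p q b rule: less_induct)
  case less
  have main: "per x a b (gcd p q)" if lt: "p < q" and pp: "0 < p" "0 < q" "per x a b p" "per x a b q"
     "a + p + q \<le> b + 1 + gcd p q" and IH: "\<And>p' q' b'. p' + q' < p + q \<Longrightarrow> 0 < p' \<Longrightarrow> 0 < q' \<Longrightarrow>
       per x a b' p' \<Longrightarrow> per x a b' q' \<Longrightarrow> a + p' + q' \<le> b' + 1 + gcd p' q' \<Longrightarrow> per x a b' (gcd p' q')"
    for p q b
  proof -
    define g where "g = gcd p q"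
    have gpq: "gcd p (q - p) = g" unfolding g_def using lt
      by (metis gcd.commute gcd_diff1_nat less_imp_le_nat)
    have gdq: "g dvd (q - p)" using gpq by (metis gcd_dvd2)
    have gpos: "0 < g" unfolding g_def using pp by simp
    have "g \<le> q - p" using gdq lt by (simp add: dvd_imp_le)
    have b1: "per x a (b - p) (q - p)" unfolding per_def
    proof (intro allI impI)
      fix k assume k: "a \<le> k" "k + (q - p) \<le> b - p"
      have "k + q \<le> b" using k lt \<open>g \<le> q - p\<close> pp(5) unfolding g_def by linarith
      then have "x k = x (k + q)" using pp(4) k unfolding per_def by auto
      moreover have "x (k + (q - p)) = x (k + (q-p) + p)" using pp(3) k \<open>k + q \<le> b\<close> lt
        unfolding per_def by auto
      ultimately show "x k = x (k + (q - p))" using lt by simp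
    qed
    have b2: "per x a (b - p) p" using per_mono[OF pp(3)] by auto
    have "per x a (b - p) (gcd p (q - p))"
      using IH[of p "q - p" "b - p"] lt pp b1 b2 gpq \<open>g \<le> q - p\<close> unfolding g_def by auto
    then have "per x a (b - p) g" using gpq by simp
    moreover have "a + p \<le> b - p + 1" using pp(5) \<open>g \<le> q - p\<close> lt unfolding g_def by linarith
    ultimately show ?thesis unfolding g_def
      using per_extend[OF pp(3), of a "b - p" g] gpos pp unfolding g_def by auto
  qed
  show ?case
  proof (cases "p = q")
    case True then show ?thesis using less by simp
  next
    case False
    show ?thesis
    proof (cases "p < q")
      case True then show ?thesis using main less by blast
    next
      case False
      then have "q < p" using \<open>p \<noteq> q\<close> by simp
      have "per x a b (gcd q p)"
        using main[of q p b] less \<open>q < p\<close> by (simp add: gcd.commute add.commute)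
      then show ?thesis by (simp add: gcd.commute)
    qed
  qed
qed

lemma r_exists:
  fixes x :: "nat \<Rightarrow> 'a::finite"
  assumes "1 \<le> n"
  shows "\<exists>m. m \<ge> 1 \<and> (\<exists>i. 1 \<le> i \<and> i + n \<le> m \<and> (\<forall>k<n. x (i + k) = x (m + 1 - n + k)))"
proof -
  define f where "f j = map (\<lambda>k. x (j + k)) [0..<n]" for j
  have fin: "finite {xs :: 'a list. set xs \<subseteq> UNIV \<and> length xs = n}"
    using finite_lists_length_eq[of "UNIV :: 'a set" n] by simp
  have sub: "f ` {1..} \<subseteq> {xs :: 'a list. set xs \<subseteq> UNIV \<and> length xs = n}" unfolding f_def by auto
  have "\<not> inj_on f {1..}"
    using inj_on_finite[OF _ sub fin] infinite_Ici[of "1::nat"] by blast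
  then obtain j1 j2 where j: "j1 \<in> {1..}" "j2 \<in> {1..}" "j1 \<noteq> j2" "f j1 = f j2"
    unfolding inj_on_def by blast
  have "\<exists>j1 j2. 1 \<le> j1 \<and> j1 < j2 \<and> f j1 = f j2"
  proof (cases "j1 < j2")
    case True then show ?thesis using j by auto
  next
    case False then show ?thesis using j by (intro exI[of _ j2] exI[of _ j1]) auto
  qed
  then obtain i j where ij: "1 \<le> i" "i < j" "f i = f j" by blast
  have eq: "x (i + k) = x (j + k)" if "k < n" for k
  proof -
    have "f i ! k = f j ! k" using ij by simp
    then show ?thesis using that unfolding f_def by simp
  qed
  show ?thesis
    using assms ij eq by (intro exI[of _ "j + n - 1"] conjI exI[of _ i]) auto
qed

lemma per_union:
  assumes "per x s c \<pi>" "per x b e \<pi>" "s \<le> b" "b + \<pi> \<le> c + 1" "c \<le> e"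
  shows "per x s e \<pi>"
  unfolding per_def
proof (intro allI impI)
  fix k assume k: "s \<le> k" "k + \<pi> \<le> e"
  show "x k = x (k + \<pi>)"
  proof (cases "k + \<pi> \<le> c")
    case True then show ?thesis using assms(1) k unfolding per_def by auto
  next
    case False then show ?thesis using assms(2,4) k unfolding per_def by auto
  qed
qed

lemma step_eq:
  assumes "1 \<le> a" "a + p \<le> n + 1" "1 \<le> b" "b + q \<le> n + 2"
    "0 < \<pi>1" "\<pi>1 \<le> p" "0 < \<pi>2" "\<pi>2 \<le> q"
    "per x a (a + n + p - 1) \<pi>1" "per x b (b + n + q) \<pi>2"
    "\<And>g. 0 < g \<Longrightarrow> per x a (a + n + p - 1) g \<Longrightarrow> \<pi>1 \<le> g"
    "\<And>g. 0 < g \<Longrightarrow> per x b (b + n + q) g \<Longrightarrow> \<pi>2 \<le> g"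
  shows "\<pi>1 = \<pi>2"
proof -
  define c where "c = max a b"
  define d where "d = min (a + n + p - 1) (b + n + q)"
  define g where "g = gcd \<pi>1 \<pi>2"
  have gpos: "0 < g" unfolding g_def using assms by simp
  have len: "c + \<pi>1 + \<pi>2 \<le> d + 2" unfolding c_def d_def using assms(1-8) by (simp add: max_def min_def)
  have p1: "per x c d \<pi>1" using per_mono[OF assms(9)] unfolding c_def d_def by auto
  have p2: "per x c d \<pi>2" using per_mono[OF assms(10)] unfolding c_def d_def by auto
  have pg: "per x c d g" unfolding g_def
    using fine_wilf[OF assms(5,7) p1 p2] len gpos unfolding g_def by linarith
  have e1: "per x a (a + n + p - 1) g"
    using per_extend[OF assms(9) pg] assms len gpos unfolding c_def d_def g_def by auto
  have e2: "per x b (b + n + q) g"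
    using per_extend[OF assms(10) pg] assms len gpos unfolding c_def d_def g_def by auto
  have "\<pi>1 \<le> g" using assms(11)[OF gpos e1] .
  moreover have "\<pi>2 \<le> g" using assms(12)[OF gpos e2] .
  moreover have "g \<le> \<pi>1" "g \<le> \<pi>2" unfolding g_def using assms by (auto intro: dvd_imp_le)
  ultimately show ?thesis by simp
qed

lemma hard:
  fixes x :: "nat \<Rightarrow> 'a::finite"
  assumes "\<forall>n\<ge>N. r n x \<le> 2 * n"
  shows "eventually_periodic x"
proof -
  define N0 where "N0 = max N 1"
  have ex: "\<exists>ap. 1 \<le> fst ap \<and> fst ap + snd ap \<le> n + 1 \<and> 0 < snd ap \<and>
      per x (fst ap) (fst ap + n + snd ap - 1) (snd ap)" if "n \<in> {N0..}" for n
  proof -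
    have n1: "1 \<le> n" "r n x \<le> 2 * n" using that assms unfolding N0_def by auto
    define m where "m = r n x"
    have "m \<ge> 1 \<and> (\<exists>i. 1 \<le> i \<and> i + n \<le> m \<and> (\<forall>k<n. x (i + k) = x (m + 1 - n + k)))"
      unfolding m_def r_def using LeastI_ex[OF r_exists[OF n1(1), of x]] .
    then obtain i where i: "1 \<le> i" "i + n \<le> m" "\<forall>k<n. x (i + k) = x (m + 1 - n + k)" by blast
    define p where "p = m + 1 - n - i"
    have pr: "per x i (i + n + p - 1) p" unfolding per_def
    proof (intro allI impI)
      fix k assume k: "i \<le> k" "k + p \<le> i + n + p - 1"
      have "k - i < n" using k i unfolding p_def by linarith
      then have "x (i + (k - i)) = x (m + 1 - n + (k - i))" using i by blast
      moreover have "m + 1 - n + (k - i) = k + p" using k i unfolding p_def by linarith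
      ultimately show "x k = x (k + p)" using k by simp
    qed
    have "i + p \<le> n + 1" "0 < p" using i n1 unfolding m_def[symmetric] p_def by linarith+
    then show ?thesis
      using i pr by (intro exI[of _ "(i, p)"]) auto
  qed
  define Q where "Q n ap \<longleftrightarrow> 1 \<le> fst ap \<and> fst ap + snd ap \<le> n + 1 \<and> 0 < snd ap \<and>
      per x (fst ap) (fst ap + n + snd ap - 1) (snd ap)" for n ap
  have "\<forall>n\<in>{N0..}. \<exists>ap. Q n ap" using ex unfolding Q_def by blast
  from bchoice[OF this] obtain F where F0: "\<forall>n\<in>{N0..}. Q n (F n)" by (elim exE)
  have F: "1 \<le> fst (F n) \<and> fst (F n) + snd (F n) \<le> n + 1 \<and> 0 < snd (F n) \<and>
      per x (fst (F n)) (fst (F n) + n + snd (F n) - 1) (snd (F n))" if "n \<in> {N0..}" for n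
    using F0 that unfolding Q_def by blast
  define A where "A n = fst (F n)" for n
  define P where "P n = snd (F n)" for n
  define E where "E n = A n + n + P n - 1" for n
  define Pi where "Pi n = (LEAST \<pi>. 0 < \<pi> \<and> per x (A n) (E n) \<pi>)" for n
  have AP: "1 \<le> A n" "A n + P n \<le> n + 1" "0 < P n" "per x (A n) (E n) (P n)" if "N0 \<le> n" for n
    using F[of n] that unfolding A_def P_def E_def by auto
  have Pi1: "0 < Pi n \<and> per x (A n) (E n) (Pi n)" if "N0 \<le> n" for n
    unfolding Pi_def by (rule LeastI[of _ "P n"]) (use AP[OF that] in auto)
  have Pi2: "Pi n \<le> g" if "N0 \<le> n" "0 < g" "per x (A n) (E n) g" for n g
    unfolding Pi_def by (rule Least_le) (use that in auto)
  have Pi3: "Pi n \<le> P n" if "N0 \<le> n" for n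
    using Pi2[OF that AP(3)[OF that] AP(4)[OF that]] .
  have const: "Pi n = Pi N0" if "N0 \<le> n" for n
    using that
  proof (induction n rule: dec_induct)
    case base then show ?case by simp
  next
    case (step n)
    have sn: "N0 \<le> Suc n" using step by simp
    have "Pi n = Pi (Suc n)"
    proof (rule step_eq[of "A n" "P n" n "A (Suc n)" "P (Suc n)"])
      show "per x (A n) (A n + n + P n - 1) (Pi n)" using Pi1[OF step(1)] unfolding E_def by simp
      show "per x (A (Suc n)) (A (Suc n) + n + P (Suc n)) (Pi (Suc n))"
        using Pi1[OF sn] unfolding E_def by simp
      show "\<And>g. 0 < g \<Longrightarrow> per x (A n) (A n + n + P n - 1) g \<Longrightarrow> Pi n \<le> g"
        using Pi2[OF step(1)] unfolding E_def by simp
      show "\<And>g. 0 < g \<Longrightarrow> per x (A (Suc n)) (A (Suc n) + n + P (Suc n)) g \<Longrightarrow> Pi (Suc n) \<le> g"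
        using Pi2[OF sn] unfolding E_def by simp
    qed (use AP[OF step(1)] AP[OF sn] Pi1[OF step(1)] Pi1[OF sn] Pi3[OF step(1)] Pi3[OF sn] in auto)
    then show ?case using step by simp
  qed
  define s where "s = A N0"
  define \<pi> where "\<pi> = Pi N0"
  have pipos: "0 < \<pi>" using Pi1[of N0] unfolding \<pi>_def by simp
  have uni: "per x s (E n) \<pi>" if "N0 \<le> n" for n
    using that
  proof (induction n rule: dec_induct)
    case base then show ?case using Pi1[of N0] unfolding s_def \<pi>_def by simp
  next
    case (step n)
    have sn: "N0 \<le> Suc n" using step by simp
    have I: "per x (A (Suc n)) (E (Suc n)) \<pi>" using Pi1[OF sn] const[OF sn] unfolding \<pi>_def by simp
    show ?case
    proof (cases "E (Suc n) \<le> E n")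
      case True then show ?thesis using per_mono[OF step(3)] by auto
    next
      case False
      show ?thesis
      proof (cases "A (Suc n) \<le> s")
        case True then show ?thesis using per_mono[OF I] by auto
      next
        case False2: False
        have "\<pi> \<le> P n" using Pi3[OF step(1)] const[OF step(1)] unfolding \<pi>_def by simp
        then have "A (Suc n) + \<pi> \<le> E n + 1" using AP[OF step(1)] AP[OF sn] unfolding E_def by linarith
        then show ?thesis using per_union[OF step(3) I] False False2 by auto
      qed
    qed
  qed
  have s1: "1 \<le> s" using AP[of N0] unfolding s_def by simp
  have "\<forall>k\<ge>s. x (k + \<pi>) = x k"
  proof (intro allI impI)
    fix k assume k: "s \<le> k"
    define n where "n = k + \<pi> + N0"
    have "N0 \<le> n" unfolding n_def by simp
    moreover have "k + \<pi> \<le> E n" using AP[OF \<open>N0 \<le> n\<close>] unfolding E_def n_def by linarith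
    ultimately have "x k = x (k + \<pi>)" using uni[of n] k unfolding per_def by blast
    then show "x (k + \<pi>) = x k" by simp
  qed
  then show ?thesis unfolding eventually_periodic_def using s1 pipos by blast
qed

lemma easy1:
  assumes "eventually_periodic x"
  shows "\<exists>M::int. \<forall>n\<ge>1. int (r n x) - int n \<le> M"
proof -
  obtain p N where pN: "p > 0" "N \<ge> 1" "\<forall>k\<ge>N. x (k + p) = x k"
    using assms unfolding eventually_periodic_def by blast
  have "r n x \<le> N + p + n - 1" if "n \<ge> 1" for n
    unfolding r_def
  proof (rule Least_le, intro conjI exI[of _ N])
    show "1 \<le> N + p + n - 1" "1 \<le> N" "N + n \<le> N + p + n - 1" using pN that by auto
    show "\<forall>k<n. x (N + k) = x (N + p + n - 1 + 1 - n + k)"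
    proof (intro allI impI)
      fix k assume "k < n"
      have "N + p + n - 1 + 1 - n + k = (N + k) + p" using pN that by simp
      then show "x (N + k) = x (N + p + n - 1 + 1 - n + k)" using pN(3)[rule_format, of "N+k"] by (simp add: add.commute add.left_commute)
    qed
  qed
  then show ?thesis by (intro exI[of _ "int (N + p)"]) force
qed

lemma easy2:
  assumes "\<forall>n\<ge>1. int (r n x) - int n \<le> M"
  shows "\<exists>N. \<forall>n\<ge>N. r n x \<le> 2 * n"
proof (intro exI[of _ "nat M + 1"] allI impI)
  fix n assume n: "nat M + 1 \<le> n"
  then have "int (r n x) - int n \<le> M" using assms by auto
  then show "r n x \<le> 2 * n" using n by linarith
qed

lemma easy0:
  assumes "eventually_periodic x"
  shows "\<exists>N. \<forall>n\<ge>N. r n x \<le> 2 * n"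
  using easy1[OF assms] easy2 by blast

theorem theorem2p3:
  fixes x :: "nat \<Rightarrow> 'a::finite"
  shows "(eventually_periodic x \<longleftrightarrow> (\<exists>N. \<forall>n\<ge>N. r n x \<le> 2 * n))
       \<and> ((\<exists>N. \<forall>n\<ge>N. r n x \<le> 2 * n) \<longleftrightarrow> (\<exists>M::int. \<forall>n\<ge>1. int (r n x) - int n \<le> M))"
  using easy0[of x] hard[of _ x] easy1[of x] easy2[of x] by blast

end
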